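(* For $z\in\{z\in\mathbb{C}:|\arg(z)|<\pi\}$, \[ {}_2F_2\left(\begin{matrix}1,&1\\3,&z+2\end{matrix};z\right)=\frac{2(z+1)}{z^2}\left(1+z-\frac{\gamma(z,z)}{z^{z-1}e^{-z}}\right). \] In particular, for every positive integer $n$, \[ {}_2F_2\left(\begin{matrix}1,&1\\3,&n+2\end{matrix};n\right)=\frac{2(n+1)}{n^2}\left(1+n-\frac{(n-1)!}{n^{n-1}}\left(e^n-\sum_{k=0}^{n-1}\frac{n^k}{k!}\right)\right). \]
   Context: ${}_pF_q$ denotes the generalized hypergeometric series $\sum_{k\ge0}\frac{(a_1)_k\cdots(a_p)_k}{(b_1)_k\cdots(b_q)_k}\frac{x^k}{k!}$, with $(a)_k$ the Pochhammer symbol. $\gamma(s,x)=\int_0^x t^{s-1}e^{-t}\,dt$ is the lower incomplete gamma function; $z^{z-1}$ uses the principal branch. *)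

theory Defs
  imports "HOL-Complex_Analysis.Complex_Analysis"
begin

definition hypergeom :: "'a::real_normed_field list \<Rightarrow> 'a list \<Rightarrow> 'a \<Rightarrow> 'a" where
  "hypergeom as bs x =
     (\<Sum>k. (\<Prod>a\<leftarrow>as. pochhammer a k) / (\<Prod>b\<leftarrow>bs. pochhammer b k) * x ^ k / fact k)"

text \<open>Lower incomplete gamma function: for Re s > 0 the integral of t powr (s-1) * exp(-t)
  along the segment from 0 to x (principal branch); for Re s \<le> 0 the standard analytic
  continuation in s via the recurrence gamma(s,x) = (gamma(s+1,x) + x^s e^(-x)) / s.\<close>
fun lower_gamma_aux :: "nat \<Rightarrow> complex \<Rightarrow> complex \<Rightarrow> complex" where
  "lower_gamma_aux 0 s x = contour_integral (linepath 0 x) (\<lambda>t. t powr (s - 1) * exp (- t))"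
| "lower_gamma_aux (Suc n) s x = (lower_gamma_aux n (s + 1) x + x powr s * exp (- x)) / s"

definition lower_gamma :: "complex \<Rightarrow> complex \<Rightarrow> complex" where
  "lower_gamma s x =
     (if Re s > 0 then lower_gamma_aux 0 s x
      else lower_gamma_aux (nat (\<lfloor>- Re s\<rfloor> + 1)) s x)"

end

theory Submission
  imports Defs
begin

lemma ratio_summable:
  fixes f :: "nat \<Rightarrow> 'a::{real_normed_field,banach}"
  assumes rec: "\<And>n. f (Suc n) = f n * (w / (c + of_nat n))"
  shows "summable f"
proof -
  obtain N :: nat where N: "real N \<ge> 2 * norm w + norm c + 1"
    using real_arch_simple by blast
  show ?thesis
  proof (rule summable_ratio_test[where c="1/2" and N=N])
    fix n assume n: "N \<le> n"
    have "norm (c + of_nat n) \<ge> real n - norm c"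
      using norm_triangle_ineq2[of "of_nat n" "-c"] by (simp add: add.commute)
    moreover have "real n \<ge> real N" using n by simp
    ultimately have big: "norm (c + of_nat n) \<ge> 2 * norm w + 1" using N by linarith
    hence pos: "norm (c + of_nat n) > 0" by (smt (verit) norm_ge_zero)
    have "norm (w / (c + of_nat n)) = norm w / norm (c + of_nat n)" by (simp add: norm_divide)
    also have "\<dots> \<le> 1/2" using big pos by (simp add: divide_le_eq)
    finally have "norm (w / (c + of_nat n)) \<le> 1/2" .
    thus "norm (f (Suc n)) \<le> 1/2 * norm (f n)"
    proof -
      have "norm (f (Suc n)) = norm (f n) * norm (w / (c + of_nat n))" by (simp add: rec norm_mult norm_divide)
      also have "\<dots> \<le> norm (f n) * (1/2)" by (rule mult_left_mono) (use \<open>norm (w / (c + of_nat n)) \<le> 1/2\<close> in auto)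
      finally show ?thesis by simp
    qed
  qed simp
qed

lemma poch3': "pochhammer (3::'a::field_char_0) k * 2 = fact (k+2)"
proof (induction k)
  case 0 show ?case by (simp add: fact_numeral)
next
  case (Suc k)
  have "pochhammer (3::'a) (Suc k) * 2 = (pochhammer 3 k * 2) * (3 + of_nat k)"
    by (simp add: pochhammer_Suc)
  also have "\<dots> = fact (k+2) * of_nat (Suc (k+2))" using Suc by (simp add: add.commute)
  also have "\<dots> = fact (Suc (k+2))" by (simp only: fact_Suc mult.commute)
  finally show ?case by simp
qed

lemma poch3: "pochhammer (3::'a::field_char_0) k = fact (k+2) / 2"
  using poch3'[of k, where 'a='a] by (simp add: eq_divide_eq)

lemma aux1: "(a::'a::field) \<noteq> 0 \<Longrightarrow> a + 1 \<noteq> 0 \<Longrightarrow> x/(a*(a+1)) - x/a = - x/(a+1)"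
proof -
  assume h: "a \<noteq> 0" "a + 1 \<noteq> 0"
  have "x/(a*(a+1)) - x/a = (x - x*(a+1))/(a*(a+1))" using h by (simp add: diff_divide_distrib)
  also have "x - x*(a+1) = - x * a" by (simp add: algebra_simps)
  also have "- x * a / (a*(a+1)) = - x/(a+1)" using h by simp
  finally show ?thesis .
qed
lemma aux2: "(c::'a::field) \<noteq> 0 \<Longrightarrow> d \<noteq> 0 \<Longrightarrow> c = z + d \<Longrightarrow> x/c + x*z/c/d = x/d"
proof -
  assume h: "c \<noteq> 0" "d \<noteq> 0" "c = z + d"
  have "x/c + x*z/c/d = (x*d + x*z)/(c*d)" using h by (simp add: add_divide_distrib)
  also have "x*d + x*z = x * c" using h by (simp add: algebra_simps)
  also have "x * c / (c*d) = x / d" using h by simp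
  finally show ?thesis .
qed

lemma partA:
  fixes z :: "'a::{real_normed_field,banach}"
  assumes nz: "\<And>j::nat. z + of_nat j + 2 \<noteq> 0"
  shows "hypergeom [1, 1] [3, z + 2] z = 2 - 2 * (\<Sum>j. z^j / pochhammer (z+2) (Suc j))"
proof -
  define e where "e k = z^k / pochhammer (z+2) k" for k
  define b where "b j = z^j / pochhammer (z+2) (Suc j)" for j
  define t where "t k = (\<Prod>a\<leftarrow>[1,1]. pochhammer a k) / (\<Prod>b\<leftarrow>[3, z+2]. pochhammer b k) * z ^ k / fact k" for k
  have pnz: "pochhammer (z+2) k \<noteq> 0" for k
  proof
    assume "pochhammer (z+2) k = 0"
    then obtain j where j: "z + 2 = - of_nat j" by (auto simp: pochhammer_eq_0_iff)
    have "z + of_nat j + 2 = (z + 2) + of_nat j" by (simp add: algebra_simps)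
    also have "\<dots> = 0" by (simp add: j)
    finally have "z + of_nat j + 2 = 0" .
    with nz show False by blast
  qed
  have t_eq: "t k = 2 * e k / ((of_nat k + 1) * (of_nat k + 2))" for k
  proof -
    have f: "(fact (k+2) :: 'a) = fact k * ((of_nat k + 1) * (of_nat k + 2))"
      by (simp add: algebra_simps)
    have k1: "(of_nat k + 1 :: 'a) \<noteq> 0" using of_nat_eq_0_iff[of "k+1", where 'a='a] by (simp add: add.commute)
    have k2: "(of_nat k + 2 :: 'a) \<noteq> 0" using of_nat_eq_0_iff[of "k+2", where 'a='a] by (simp add: add.commute)
    have fk: "(fact k :: 'a) \<noteq> 0" by simp
    have "t k = fact k * fact k / (fact (k+2) / 2 * pochhammer (z+2) k) * z ^ k / fact k"
      by (simp add: t_def poch3 pochhammer_fact[symmetric])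
    also have "\<dots> = 2 * (z^k / pochhammer (z+2) k) / ((of_nat k + 1) * (of_nat k + 2))"
      unfolding f using pnz[of k] k1 k2 fk by (simp add: divide_simps)
    finally show ?thesis by (simp add: e_def)
  qed
  have eSuc: "e (Suc N) = e N * z / (z + of_nat N + 2)" for N
    unfolding e_def by (simp add: pochhammer_Suc add_ac)
  have bN: "b N = e N / (z + of_nat N + 2)" for N
    unfolding e_def b_def by (simp add: pochhammer_Suc add_ac)
  have partial: "(\<Sum>k<N. t k) = 2 - 2 * (\<Sum>j<N. b j) - 2 * e N / (of_nat N + 1)" for N
  proof (induction N)
    case 0 thus ?case by (simp add: e_def)
  next
    case (Suc N)
    have d: "z + of_nat N + 2 \<noteq> 0" by (rule nz)
    have d2a: "(of_nat N + 1 :: 'a) \<noteq> 0" using of_nat_eq_0_iff[of "N+1", where 'a='a] by (simp add: add.commute)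
    have d2b: "(of_nat N + 2 :: 'a) \<noteq> 0" using of_nat_eq_0_iff[of "N+2", where 'a='a] by (simp add: add.commute)
    have "(\<Sum>k<Suc N. t k) = (\<Sum>k<N. t k) + t N" by simp
    also have "\<dots> = 2 - 2 * (\<Sum>j<N. b j) + 2 * (e N / ((of_nat N + 1) * (of_nat N + 1 + 1)) - e N / (of_nat N + 1))"
      proof -
      have tN: "t N = 2 * (e N / ((of_nat N + 1) * (of_nat N + 1 + 1)))"
        using t_eq[of N] by (simp add: add.assoc)
      show ?thesis unfolding Suc.IH tN by (simp add: algebra_simps)
    qed
    also have "e N / ((of_nat N + 1) * (of_nat N + 1 + 1)) - e N / (of_nat N + 1) = - e N / (of_nat N + 1 + 1)"
      by (rule aux1) (use d2a d2b in \<open>simp_all add: add.assoc\<close>)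
    also have "- e N / (of_nat N + 1 + 1) = - (e N / (z + of_nat N + 2) + e N * z / (z + of_nat N + 2) / (of_nat N + 2))"
      using aux2[OF d d2b, of z "e N"] by (simp add: add.assoc)
    also have "2 - 2 * (\<Sum>j<N. b j) + 2 * \<dots> = 2 - 2 * (\<Sum>j<Suc N. b j) - 2 * e (Suc N) / (of_nat (Suc N) + 1)"
      proof -
      have "(of_nat (Suc N) + 1 :: 'a) = of_nat N + 2" by simp
      thus ?thesis unfolding bN eSuc by (simp add: algebra_simps)
    qed
    finally show ?case .
  qed
  have sb: "summable b"
    by (rule ratio_summable[where w=z and c="z+3"]) (simp add: b_def pochhammer_Suc add_ac field_simps)
  have b0: "b \<longlonglongrightarrow> 0" by (rule summable_LIMSEQ_zero[OF sb])
  have e0: "(\<lambda>N. 2 * e N / (of_nat N + 1)) \<longlonglongrightarrow> 0"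
  proof (rule Lim_null_comparison)
    show "\<forall>\<^sub>F N in sequentially. norm (2 * e N / (of_nat N + 1)) \<le> 2 * (norm z + 2) * norm (b N)"
    proof (rule always_eventually, rule allI)
      fix N
      have eN: "e N = b N * (z + of_nat N + 2)" using bN[of N] nz[of N] by simp
      have n1: "norm (of_nat N + 1 :: 'a) = real N + 1"
      proof -
        have "(of_nat N + 1 :: 'a) = of_nat (Suc N)" by simp
        thus ?thesis by (simp only: norm_of_nat)
      qed
      have X: "norm (z + of_nat N + 2) \<le> (norm z + 2) * (real N + 1)"
      proof -
        have "norm (z + of_nat N + 2) \<le> norm (z + of_nat N) + norm (2::'a)" by (rule norm_triangle_ineq)
        moreover have "norm (z + of_nat N) \<le> norm z + norm (of_nat N :: 'a)" by (rule norm_triangle_ineq)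
        ultimately have "norm (z + of_nat N + 2) \<le> norm z + real N + 2" by (simp only: norm_of_nat norm_numeral)
        also have "\<dots> \<le> (norm z + 2) * (real N + 1)" by (simp add: algebra_simps)
        finally show ?thesis .
      qed
      have "norm (2 * e N / (of_nat N + 1)) = 2 * norm (b N) * norm (z + of_nat N + 2) / (real N + 1)"
        by (simp add: eN norm_mult norm_divide n1)
      also have "\<dots> \<le> 2 * (norm z + 2) * norm (b N)"
      proof -
        have "2 * norm (b N) * norm (z + of_nat N + 2) \<le> 2 * norm (b N) * ((norm z + 2) * (real N + 1))"
          by (rule mult_left_mono[OF X]) simp
        thus ?thesis by (simp add: divide_le_eq algebra_simps)
      qed
      finally show "norm (2 * e N / (of_nat N + 1)) \<le> 2 * (norm z + 2) * norm (b N)" .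
    qed
    show "(\<lambda>N. 2 * (norm z + 2) * norm (b N)) \<longlonglongrightarrow> 0"
      using tendsto_mult_right_zero[OF tendsto_norm_zero[OF b0]] by simp
  qed
  have "(\<lambda>N. \<Sum>k<N. t k) \<longlonglongrightarrow> 2 - 2 * suminf b - 0"
    unfolding partial
    by (intro tendsto_diff tendsto_mult tendsto_const e0) (use sb summable_LIMSEQ in auto)
  hence "t sums (2 - 2 * suminf b)" by (simp add: sums_def)
  thus ?thesis unfolding hypergeom_def t_def[symmetric] b_def by (simp add: sums_iff)
qed

lemma partB:
  fixes z :: "'a::{real_normed_field,banach}"
  assumes z0: "z \<noteq> 0" and z1: "z + 1 \<noteq> 0"
  shows "2 * (z + 1) / z\<^sup>2 * (1 + z - (\<Sum>m. z^(Suc m) / pochhammer z (Suc m)))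
         = 2 - 2 * (\<Sum>j. z^j / pochhammer (z+2) (Suc j))"
proof -
  define g where "g m = z^(Suc m) / pochhammer z (Suc m)" for m
  define b where "b j = z^j / pochhammer (z+2) (Suc j)" for j
  have sg: "summable g"
  proof (rule ratio_summable[where w=z and c="z+1"])
    fix m
    have "pochhammer z (Suc (Suc m)) = pochhammer z (Suc m) * (z + 1 + of_nat m)"
      by (simp add: pochhammer_Suc[of z "Suc m"] add_ac)
    thus "g (Suc m) = g m * (z / (z + 1 + of_nat m))"
      unfolding g_def by (simp add: times_divide_times_eq)
  qed
  have sb: "summable b"
    by (rule ratio_summable[where w=z and c="z+3"]) (simp add: b_def pochhammer_Suc add_ac field_simps)
  have split: "suminf g = (\<Sum>n. g (n+2)) + (g 0 + g 1)"
    using suminf_split_initial_segment[OF sg, of 2] by (simp add: numeral_2_eq_2)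
  have g0: "g 0 = 1" using z0 by (simp add: g_def)
  have g1: "g 1 = z / (z + 1)" using z0 by (simp add: g_def pochhammer_Suc power2_eq_square)
  have gn: "g (n+2) = z^2 / (z+1) * b n" for n
  proof -
    have p: "pochhammer z (Suc (n+2)) = z * ((z+1) * pochhammer (z+2) (Suc n))"
    proof -
      have e: "Suc (n+2) = Suc (Suc (Suc n))" by simp
      have z2: "z + 1 + 1 = z + 2" by (simp add: add.assoc)
      show ?thesis unfolding e z2[symmetric] by (simp only: pochhammer_rec)
    qed
    show ?thesis unfolding g_def b_def p using z0 z1
      by (simp add: power_add power2_eq_square divide_simps)
  qed
  have "(\<Sum>n. g (n+2)) = z^2/(z+1) * suminf b"
    unfolding gn by (rule suminf_mult[OF sb])
  hence sg': "suminf g = z^2/(z+1) * suminf b + 1 + z/(z+1)" using split g0 g1 by simp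
  show ?thesis
  proof -
    define B where "B = suminf b"
    have i1: "z - z/(z+1) = z^2/(z+1)" using z1 by (simp add: field_simps power2_eq_square)
    have i2: "1 + z - (z^2/(z+1)*B + 1 + z/(z+1)) = z^2/(z+1) * (1 - B)"
    proof -
      have gen: "z - v = w \<Longrightarrow> 1 + z - (w*B + 1 + v) = w * (1 - B)" for v w :: 'a
        by (simp add: algebra_simps)
      show ?thesis by (rule gen[OF i1])
    qed
    have i3: "2*(z+1)/z^2 * (z^2/(z+1)) = 2" using z0 z1 by (simp add: divide_simps)
    have "2 * (z + 1) / z\<^sup>2 * (1 + z - suminf g) = (2*(z+1)/z^2 * (z^2/(z+1))) * (1 - B)"
      unfolding sg' B_def[symmetric] i2 by (simp only: mult.assoc)
    also have "\<dots> = 2 - 2 * B" unfolding i3 by (simp add: algebra_simps)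
    finally show ?thesis unfolding g_def B_def b_def .
  qed
qed

lemma poch_fact:
  assumes "m > 0"
  shows "pochhammer (real m) k * fact (m - 1) = fact (m - 1 + k)"
proof (induction k)
  case 0 show ?case by simp
next
  case (Suc k)
  have "pochhammer (real m) (Suc k) * fact (m - 1) = (pochhammer (real m) k * fact (m - 1)) * (real m + real k)"
    by (simp add: pochhammer_Suc)
  also have "\<dots> = fact (m - 1 + k) * real (Suc (m - 1 + k))" using Suc assms by simp
  also have "\<dots> = fact (Suc (m - 1 + k))" by (simp only: fact_Suc mult.commute)
  finally show ?case by simp
qed

lemma partD:
  assumes n: "n > 0"
  shows "fact (n - 1) / real n ^ (n - 1) * (exp (real n) - (\<Sum>k<n. real n ^ k / fact k))
         = (\<Sum>m. real n ^ Suc m / pochhammer (real n) (Suc m))"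
proof -
  have e: "(\<lambda>k. real n ^ k / fact k) sums exp (real n)"
    using exp_converges[of "real n"] by (simp add: divide_inverse mult.commute)
  have "(\<lambda>i. fact (n - 1) / real n ^ (n - 1) * (real n ^ (i + n) / fact (i + n))) sums
        (fact (n - 1) / real n ^ (n - 1) * (exp (real n) - (\<Sum>k<n. real n ^ k / fact k)))"
    by (rule sums_mult[OF sums_split_initial_segment[OF e]])
  moreover have "fact (n - 1) / real n ^ (n - 1) * (real n ^ (i + n) / fact (i + n))
      = real n ^ Suc i / pochhammer (real n) (Suc i)" for i
  proof -
    have pf: "pochhammer (real n) (Suc i) * fact (n - 1) = fact (i + n)"
      using poch_fact[OF n, of "Suc i"] n by (simp add: add.commute)
    have pw: "real n ^ (i + n) = real n ^ Suc i * real n ^ (n - 1)"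
    proof -
      have "i + n = Suc i + (n - 1)" using n by simp
      thus ?thesis by (simp only: power_add)
    qed
    have nz: "pochhammer (real n) (Suc i) \<noteq> 0" "real n ^ (n - 1) \<noteq> 0" "(fact (n - 1)::real) \<noteq> 0"
      using n by (auto simp: pochhammer_eq_0_iff)
    show ?thesis unfolding pf[symmetric] pw using nz by (simp add: divide_simps)
  qed
  ultimately show ?thesis by (simp add: sums_iff)
qed

definition cf :: "complex \<Rightarrow> nat \<Rightarrow> complex" where
  "cf s k = 1 / pochhammer s (Suc k)"

definition Pser :: "complex \<Rightarrow> complex \<Rightarrow> complex" where
  "Pser s w = (\<Sum>k. cf s k * w^k)"

lemma cf_summable: "summable (\<lambda>k. cf s k * w^k)"
proof (rule ratio_summable[where w=w and c="s+1"])
  fix m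
  have "pochhammer s (Suc (Suc m)) = pochhammer s (Suc m) * (s + 1 + of_nat m)"
    by (simp add: pochhammer_Suc[of s "Suc m"] add_ac)
  thus "cf s (Suc m) * w ^ Suc m = cf s m * w ^ m * (w / (s + 1 + of_nat m))"
    unfolding cf_def by (simp add: times_divide_times_eq mult_ac)
qed

lemma Pser_sums: "(\<lambda>k. cf s k * w^k) sums Pser s w"
  unfolding Pser_def using cf_summable by (rule summable_sums)

lemma Pser_rec:
  assumes s0: "s \<noteq> 0"
  shows "Pser s x = (1 + x * Pser (s+1) x) / s"
proof -
  define h where "h k = x^k / pochhammer (s+1) k" for k
  have "(\<lambda>k. h (Suc k)) sums (x * Pser (s+1) x)"
  proof -
    have "h (Suc k) = x * (cf (s+1) k * x^k)" for k
      unfolding h_def cf_def by simp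
    thus ?thesis using sums_mult[OF Pser_sums[of "s+1" x], of x] by simp
  qed
  hence "h sums (x * Pser (s+1) x + h 0)" by (simp add: sums_Suc_iff)
  hence "h sums (x * Pser (s+1) x + 1)" by (simp add: h_def)
  hence "(\<lambda>k. h k / s) sums ((x * Pser (s+1) x + 1) / s)" by (rule sums_divide)
  moreover have "h k / s = cf s k * x^k" for k
    unfolding h_def cf_def by (simp add: pochhammer_rec)
  ultimately have "(\<lambda>k. cf s k * x^k) sums ((x * Pser (s+1) x + 1) / s)" by simp
  thus ?thesis using Pser_sums[of s x] sums_unique2 by (simp add: add.commute)
qed

lemma Pser_ode:
  assumes s: "\<And>k::nat. s + of_nat k \<noteq> 0"
  shows "s * Pser s w + w * (\<Sum>k. diffs (cf s) k * w^k) = w * Pser s w + 1"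
proof -
  define P' where "P' = (\<Sum>k. diffs (cf s) k * w^k)"
  have sP': "(\<lambda>k. diffs (cf s) k * w^k) sums P'"
    unfolding P'_def by (rule summable_sums, rule termdiff_converges_all) (rule cf_summable)
  define q where "q m = of_nat m * cf s m * w^m" for m
  have "(\<lambda>k. q (Suc k)) sums (w * P')"
  proof -
    have "q (Suc k) = w * (diffs (cf s) k * w^k)" for k
      unfolding q_def diffs_def by (simp add: mult_ac)
    thus ?thesis using sums_mult[OF sP', of w] by simp
  qed
  hence "q sums (w * P' + q 0)" by (simp only: sums_Suc_iff)
  hence q: "q sums (w * P')" by (simp add: q_def)
  have "(\<lambda>k. s * (cf s k * w^k) + q k) sums (s * Pser s w + w * P')"
    by (intro sums_add sums_mult Pser_sums q)
  moreover have "s * (cf s k * w^k) + q k = w^k / pochhammer s k" for k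
  proof -
    have pz: "pochhammer s k \<noteq> 0" "s + of_nat k \<noteq> 0"
      using s by (auto simp: pochhammer_eq_0_iff) (metis add.commute add_eq_0_iff)
    show ?thesis unfolding q_def cf_def using pz
      by (simp add: pochhammer_Suc divide_simps) (simp add: algebra_simps)
  qed
  ultimately have r: "(\<lambda>k. w^k / pochhammer s k) sums (s * Pser s w + w * P')" by simp
  have "(\<lambda>k. w^(Suc k) / pochhammer s (Suc k)) sums (w * Pser s w)"
  proof -
    have "w^(Suc k) / pochhammer s (Suc k) = w * (cf s k * w^k)" for k
      unfolding cf_def by simp
    thus ?thesis using sums_mult[OF Pser_sums[of s w], of w] by simp
  qed
  hence "(\<lambda>k. w^k / pochhammer s k) sums (w * Pser s w + 1)"
    by (subst (asm) sums_Suc_iff) simp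
  with r show ?thesis unfolding P'_def[symmetric] using sums_unique2 by blast
qed

lemma Pser_deriv: "(Pser s has_field_derivative (\<Sum>k. diffs (cf s) k * w^k)) (at w)"
proof -
  have e: "Pser s = (\<lambda>w. \<Sum>k. cf s k * w^k)" by (rule ext) (simp add: Pser_def)
  show ?thesis unfolding e by (rule termdiffs_strong_converges_everywhere) (rule cf_summable)
qed

lemma Pser_cont: "isCont (Pser s) w"
proof -
  have e: "Pser s = (\<lambda>w. \<Sum>k. cf s k * w^k)" by (rule ext) (simp add: Pser_def)
  show ?thesis unfolding e by (rule isCont_powser_converges_everywhere) (rule cf_summable)
qed

lemma powr_Suc_split: "(w::complex) \<noteq> 0 \<Longrightarrow> w powr s = w * w powr (s - 1)"
proof -
  assume "w \<noteq> 0"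
  have "w powr s = w powr ((s - 1) + 1)" by simp
  also have "\<dots> = w powr (s - 1) * w" by (simp only: powr_add powr_to_1)
  finally show ?thesis by simp
qed

lemma G_deriv:
  assumes w: "w \<notin> \<real>\<^sub>\<le>\<^sub>0" and s: "\<And>k::nat. s + of_nat k \<noteq> 0"
  shows "((\<lambda>w. w powr s * exp (- w) * Pser s w) has_field_derivative (w powr (s - 1) * exp (- w))) (at w)"
proof -
  define P' where "P' = (\<Sum>k. diffs (cf s) k * w^k)"
  have w0: "w \<noteq> 0" using w by auto
  have dpow: "((\<lambda>w. w powr s) has_field_derivative (s * w powr (s - 1))) (at w)"
    by (rule has_field_derivative_powr[OF w])
  have dexp: "((\<lambda>w. exp (- w)) has_field_derivative (- exp (- w))) (at w)"
    by (auto intro!: derivative_eq_intros)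
  have dP: "(Pser s has_field_derivative P') (at w)" unfolding P'_def by (rule Pser_deriv)
  have ode: "s * Pser s w + w * P' = w * Pser s w + 1" unfolding P'_def by (rule Pser_ode[OF s])
  show ?thesis
  proof (rule DERIV_cong[OF DERIV_mult'[OF DERIV_mult'[OF dpow dexp] dP]])
    define A where "A = w powr (s - 1)"
    define E where "E = exp (- w)"
    define P where "P = Pser s w"
    have ws: "w powr s = w * A" unfolding A_def by (rule powr_Suc_split[OF w0])
    have "w powr s * exp (- w) * P' + (w powr s * - exp (- w) + s * w powr (s - 1) * exp (- w)) * Pser s w
          = A * E * ((s * P + w * P') - w * P)"
      unfolding ws A_def[symmetric] E_def[symmetric] P_def[symmetric] by (simp add: algebra_simps)
    also have "\<dots> = A * E" using ode unfolding P_def[symmetric] by simp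
    finally show "w powr s * exp (- w) * P' + (w powr s * - exp (- w) + s * w powr (s - 1) * exp (- w)) * Pser s w
          = w powr (s - 1) * exp (- w)" unfolding A_def E_def .
  qed
qed

lemma aux0_eq:
  assumes x: "x \<notin> \<real>\<^sub>\<le>\<^sub>0" and s: "Re s > 0"
  shows "lower_gamma_aux 0 s x = x powr s * exp (- x) * Pser s x"
proof -
  have sk: "s + of_nat k \<noteq> 0" for k :: nat
  proof
    assume "s + of_nat k = 0"
    hence "Re (s + of_nat k) = 0" by simp
    with s show False by simp
  qed
  define G where "G w = w powr s * exp (- w) * Pser s w" for w
  define F where "F u = G (of_real u * x)" for u :: real
  have ux: "of_real u * x \<notin> \<real>\<^sub>\<le>\<^sub>0" if "u > 0" for u :: real
    using x that by (auto simp: complex_nonpos_Reals_iff mult_le_0_iff)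
  have deriv: "(F has_vector_derivative ((of_real u * x) powr (s - 1) * exp (- (of_real u * x)) * x)) (at u)"
    if "u \<in> {0<..<1}" for u :: real
  proof -
    have u: "u > 0" using that by simp
    have d1: "((\<lambda>y. y * x) has_field_derivative x) (at (of_real u))"
      by (auto intro!: derivative_eq_intros)
    have "((\<lambda>y. G (y * x)) has_field_derivative ((of_real u * x) powr (s - 1) * exp (- (of_real u * x))) * x) (at (of_real u))"
      unfolding G_def by (rule DERIV_chain2[OF G_deriv[OF ux[OF u] sk] d1])
    from has_vector_derivative_real_field[OF this] show ?thesis unfolding F_def by simp
  qed
  have cont: "continuous_on {0..1} F"
  proof -
    have c1: "continuous_on {0..1} (\<lambda>u::real. (of_real u * x) powr s)"
      unfolding continuous_on_def
    proof
      fix u :: real assume u: "u \<in> {0..1}"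
      show "((\<lambda>u. (of_real u * x) powr s) \<longlongrightarrow> (of_real u * x) powr s) (at u within {0..1})"
      proof (rule tendsto_powr_complex')
        show "of_real u * x \<notin> \<real>\<^sub>\<le>\<^sub>0 \<or> of_real u * x = 0 \<and> 0 < Re s"
          using u ux[of u] s by (cases "u = 0") auto
      qed (auto intro!: tendsto_intros)
    qed
    have c2: "continuous_on {0..1} (\<lambda>u::real. exp (- (of_real u * x)))"
      by (intro continuous_intros)
    have c3: "continuous_on {0..1} (\<lambda>u::real. Pser s (of_real u * x))"
      by (intro continuous_at_imp_continuous_on ballI isCont_o2[OF _ Pser_cont]) (intro continuous_intros)
    show ?thesis unfolding F_def G_def by (intro continuous_on_mult c1 c2 c3)
  qed
  have I: "((\<lambda>u. (of_real u * x) powr (s - 1) * exp (- (of_real u * x)) * x) has_integral (F 1 - F 0)) {0..1}"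
    by (rule fundamental_theorem_of_calculus_interior) (use cont deriv in auto)
  have F1: "F 1 = G x" by (simp add: F_def)
  have F0: "F 0 = 0" by (simp add: F_def G_def)
  have "((\<lambda>t. t powr (s - 1) * exp (- t)) has_contour_integral G x) (linepath 0 x)"
    unfolding has_contour_integral_def
  proof (rule has_integral_eq[OF _ I[unfolded F1 F0, simplified]])
    fix u :: real assume u: "u \<in> {0..1}"
    have vd: "vector_derivative (linepath 0 x) (at u within {0..1}) = x"
      using vector_derivative_linepath_within[OF u, of 0 x] by simp
    have lp: "linepath 0 x u = of_real u * x" by (simp add: linepath_def scaleR_conv_of_real)
    show "(of_real u * x) powr (s - 1) * exp (- (of_real u * x)) * x =
          linepath 0 x u powr (s - 1) * exp (- linepath 0 x u) * vector_derivative (linepath 0 x) (at u within {0..1})"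
      unfolding vd lp by simp
  qed
  thus ?thesis by (simp add: contour_integral_unique G_def)
qed

lemma aux_eq:
  assumes x: "x \<notin> \<real>\<^sub>\<le>\<^sub>0"
  shows "Re s + of_nat n > 0 \<Longrightarrow> (\<And>j. j < n \<Longrightarrow> s + of_nat j \<noteq> 0) \<Longrightarrow>
         lower_gamma_aux n s x = x powr s * exp (- x) * Pser s x"
proof (induction n arbitrary: s)
  case 0 thus ?case using aux0_eq[OF x] by simp
next
  case (Suc n)
  have x0: "x \<noteq> 0" using x by auto
  have s0: "s \<noteq> 0" using Suc.prems(2)[of 0] by simp
  have IH: "lower_gamma_aux n (s + 1) x = x powr (s + 1) * exp (- x) * Pser (s + 1) x"
  proof (rule Suc.IH)
    show "0 < Re (s + 1) + real n" using Suc.prems(1) by simp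
    fix j assume "j < n"
    thus "s + 1 + of_nat j \<noteq> 0" using Suc.prems(2)[of "Suc j"] by (simp add: add_ac)
  qed
  have "lower_gamma_aux (Suc n) s x = (x powr (s + 1) * exp (- x) * Pser (s + 1) x + x powr s * exp (- x)) / s"
    by (simp add: IH)
  also have "x powr (s + 1) = x powr s * x" by (simp only: powr_add powr_to_1)
  also have "(x powr s * x * exp (- x) * Pser (s + 1) x + x powr s * exp (- x)) / s
           = x powr s * exp (- x) * ((1 + x * Pser (s + 1) x) / s)"
    by (simp add: algebra_simps add_divide_distrib)
  also have "(1 + x * Pser (s + 1) x) / s = Pser s x" using Pser_rec[OF s0] by simp
  finally show ?case .
qed


theorem lemma2p3:
  shows "(\<forall>z::complex. \<bar>Arg z\<bar> < pi \<and> z \<noteq> 0 \<longrightarrow>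
            hypergeom [1, 1] [3, z + 2] z =
              2 * (z + 1) / z\<^sup>2 * (1 + z - lower_gamma z z / (z powr (z - 1) * exp (- z))))
       \<and> (\<forall>n::nat. n > 0 \<longrightarrow>
            hypergeom [1, 1] [3, real n + 2] (real n) =
              2 * (real n + 1) / (real n)\<^sup>2 *
                (1 + real n - fact (n - 1) / (real n) ^ (n - 1) *
                   (exp (real n) - (\<Sum>k<n. (real n) ^ k / fact k))))"
proof (intro conjI allI impI)
  fix z :: complex
  assume h: "\<bar>Arg z\<bar> < pi \<and> z \<noteq> 0"
  have z0: "z \<noteq> 0" using h by simp
  have zR: "z \<notin> \<real>\<^sub>\<le>\<^sub>0"
  proof
    assume "z \<in> \<real>\<^sub>\<le>\<^sub>0"
    hence r: "Re z \<le> 0" "Im z = 0" by (auto simp: complex_nonpos_Reals_iff)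
    have "Re z \<noteq> 0" using z0 r(2) complex_eq_iff[of z 0] by auto
    hence "Re z < 0" using r(1) by simp
    hence "Arg z = pi" using r(2) by (simp add: Arg_eq_pi)
    thus False using h by simp
  qed
  have zj: "z + of_nat j \<noteq> 0" for j :: nat
  proof
    assume "z + of_nat j = 0"
    hence "z = - of_nat j" by (simp add: eq_neg_iff_add_eq_0)
    hence "z \<in> \<real>\<^sub>\<le>\<^sub>0" by (simp add: complex_nonpos_Reals_iff)
    with zR show False by simp
  qed
  have LG: "lower_gamma z z = z powr z * exp (- z) * Pser z z"
  proof (cases "Re z > 0")
    case True thus ?thesis unfolding lower_gamma_def using aux_eq[OF zR, of z 0] by simp
  next
    case False
    define n where "n = nat (\<lfloor>- Re z\<rfloor> + 1)"
    have fl: "\<lfloor>- Re z\<rfloor> + 1 \<ge> 1" using False by simp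
    have "real n = real_of_int (\<lfloor>- Re z\<rfloor> + 1)" unfolding n_def using fl by simp
    also have "\<dots> > - Re z" by simp
    finally have "Re z + real n > 0" by simp
    hence "lower_gamma_aux n z z = z powr z * exp (- z) * Pser z z"
      using aux_eq[OF zR, of z n] zj by blast
    thus ?thesis unfolding lower_gamma_def n_def using False by simp
  qed
  have Q: "lower_gamma z z / (z powr (z - 1) * exp (- z)) = (\<Sum>m. z^(Suc m) / pochhammer z (Suc m))"
  proof -
    have "lower_gamma z z / (z powr (z - 1) * exp (- z)) = z * Pser z z"
      unfolding LG powr_Suc_split[OF z0, of z] using z0 by simp
    also have "\<dots> = (\<Sum>k. z * (cf z k * z^k))"
      unfolding Pser_def by (rule suminf_mult[OF cf_summable, symmetric])
    also have "\<dots> = (\<Sum>m. z^(Suc m) / pochhammer z (Suc m))"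
      by (simp add: cf_def mult_ac)
    finally show ?thesis .
  qed
  have z1: "z + 1 \<noteq> 0" using zj[of 1] by simp
  have z2: "z + of_nat j + 2 \<noteq> 0" for j :: nat
    using zj[of "j + 2"] by (simp add: add_ac)
  show "hypergeom [1, 1] [3, z + 2] z =
        2 * (z + 1) / z\<^sup>2 * (1 + z - lower_gamma z z / (z powr (z - 1) * exp (- z)))"
    unfolding Q partA[OF z2] partB[OF z0 z1] ..
next
  fix n :: nat
  assume n: "n > 0"
  have r0: "real n \<noteq> 0" "real n + 1 \<noteq> 0" using n by auto
  have r2: "real n + of_nat j + 2 \<noteq> 0" for j :: nat by simp
  show "hypergeom [1, 1] [3, real n + 2] (real n) =
        2 * (real n + 1) / (real n)\<^sup>2 *
          (1 + real n - fact (n - 1) / (real n) ^ (n - 1) * (exp (real n) - (\<Sum>k<n. (real n) ^ k / fact k)))"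
    unfolding partD[OF n] partA[OF r2] partB[OF r0] ..
qed

end
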